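(* Consider the noisy graph search with Bayesian weight updates described in the context, started from uniform weights $\omega_0(v)=\frac1n$, and let $v^*$ be the target. Then for every $\tau\ge1$ and every $0<\delta<\frac12$, with probability at least $1-\delta$, $$\omega_\tau(v^* )\ge\frac{1}{n}\,\Gamma^{-\sqrt{\frac{\tau}{2}\ln\delta^{-1}}}\,2^{-H(p)\tau},$$ where $\Gamma=\frac{1-p}{p}$.
   Context: $G=(V,E)$ is a connected undirected unweighted graph with $n$ vertices and unknown target $v^*$; $0<p<\frac12$. In each step a vertex $q$ is queried (chosen adaptively); the correct answer is "yes" if $q=v^*$ and otherwise a neighbor of $q$ on a shortest path from $q$ to $v^*$; each answer is independently erroneous (arbitrary other answer) with probability $p$. Weights $\omega_t$ are updated after each answer: a vertex $v$ is compatible with a yes-answer iff $v=q$, and with a no-answer $u$ iff either $u$ lies on a shortest $q$–$v$ path, or $q$ is heavy (i.e., $\omega_{t-1}(q)\ge\frac12\sum_{w}\omega_{t-1}(w)$) and $v\ne q$; compatible vertices are multiplied by $1-p$ and the others by $p$. $H(p)=-p\log_2p-(1-p)\log_2(1-p)$. *)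

theory Defs
  imports "HOL-Probability.Probability"
begin

definition is_graph :: "'a set \<Rightarrow> ('a \<Rightarrow> 'a \<Rightarrow> bool) \<Rightarrow> bool" where
  "is_graph V E \<longleftrightarrow> finite V \<and> (\<forall>u v. E u v \<longrightarrow> u \<in> V \<and> v \<in> V \<and> E v u \<and> u \<noteq> v)"

definition walk :: "('a \<Rightarrow> 'a \<Rightarrow> bool) \<Rightarrow> 'a list \<Rightarrow> bool" where
  "walk E xs \<longleftrightarrow> xs \<noteq> [] \<and> (\<forall>i. Suc i < length xs \<longrightarrow> E (xs ! i) (xs ! Suc i))"

definition connected_graph :: "'a set \<Rightarrow> ('a \<Rightarrow> 'a \<Rightarrow> bool) \<Rightarrow> bool" where
  "connected_graph V E \<longleftrightarrow> is_graph V E \<and> V \<noteq> {} \<and>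
     (\<forall>u\<in>V. \<forall>v\<in>V. \<exists>xs. walk E xs \<and> hd xs = u \<and> last xs = v)"

definition gdist :: "('a \<Rightarrow> 'a \<Rightarrow> bool) \<Rightarrow> 'a \<Rightarrow> 'a \<Rightarrow> nat" where
  "gdist E u v = (LEAST k. \<exists>xs. walk E xs \<and> hd xs = u \<and> last xs = v \<and> length xs = Suc k)"

definition on_shortest :: "('a \<Rightarrow> 'a \<Rightarrow> bool) \<Rightarrow> 'a \<Rightarrow> 'a \<Rightarrow> 'a \<Rightarrow> bool" where
  "on_shortest E q u v \<longleftrightarrow> gdist E q u + gdist E u v = gdist E q v"

datatype 'a answer = Yes | No 'a

definition valid_answer :: "('a \<Rightarrow> 'a \<Rightarrow> bool) \<Rightarrow> 'a \<Rightarrow> 'a answer \<Rightarrow> bool" where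
  "valid_answer E q a \<longleftrightarrow> a = Yes \<or> (\<exists>u. a = No u \<and> E q u)"

definition correct_answer :: "('a \<Rightarrow> 'a \<Rightarrow> bool) \<Rightarrow> 'a \<Rightarrow> 'a \<Rightarrow> 'a answer \<Rightarrow> bool" where
  "correct_answer E t q a \<longleftrightarrow>
     (if q = t then a = Yes else (\<exists>u. a = No u \<and> E q u \<and> on_shortest E q u t))"

definition heavy :: "'a set \<Rightarrow> ('a \<Rightarrow> real) \<Rightarrow> 'a \<Rightarrow> bool" where
  "heavy V w q \<longleftrightarrow> w q \<ge> (1/2) * (\<Sum>x\<in>V. w x)"

definition compatible :: "'a set \<Rightarrow> ('a \<Rightarrow> 'a \<Rightarrow> bool) \<Rightarrow> ('a \<Rightarrow> real) \<Rightarrow> 'a \<Rightarrow> 'a answer \<Rightarrow> 'a \<Rightarrow> bool" where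
  "compatible V E w q a v \<longleftrightarrow>
     (case a of Yes \<Rightarrow> v = q
      | No u \<Rightarrow> on_shortest E q u v \<or> (heavy V w q \<and> v \<noteq> q))"

definition update :: "'a set \<Rightarrow> ('a \<Rightarrow> 'a \<Rightarrow> bool) \<Rightarrow> real \<Rightarrow> ('a \<Rightarrow> real) \<Rightarrow> 'a \<Rightarrow> 'a answer \<Rightarrow> 'a \<Rightarrow> real" where
  "update V E p w q a v = (if compatible V E w q a v then (1 - p) * w v else p * w v)"

text \<open>Q: query strategy (function of the answer transcript);
  C / W: the correct answer resp. the erroneous answer returned (chosen adaptively,
  as functions of the transcript); b t: whether the answer at step t is erroneous.\<close>
fun run :: "'a set \<Rightarrow> ('a \<Rightarrow> 'a \<Rightarrow> bool) \<Rightarrow> real \<Rightarrow> ('a answer list \<Rightarrow> 'a)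
   \<Rightarrow> ('a answer list \<Rightarrow> 'a answer) \<Rightarrow> ('a answer list \<Rightarrow> 'a answer) \<Rightarrow> (nat \<Rightarrow> bool)
   \<Rightarrow> nat \<Rightarrow> 'a answer list \<times> ('a \<Rightarrow> real)" where
  "run V E p Q C W b 0 = ([], (\<lambda>v. 1 / real (card V)))"
| "run V E p Q C W b (Suc t) =
     (let (h, w) = run V E p Q C W b t;
          q = Q h;
          a = (if b t then W h else C h)
      in (h @ [a], update V E p w q a))"

definition weight :: "'a set \<Rightarrow> ('a \<Rightarrow> 'a \<Rightarrow> bool) \<Rightarrow> real \<Rightarrow> ('a answer list \<Rightarrow> 'a)
   \<Rightarrow> ('a answer list \<Rightarrow> 'a answer) \<Rightarrow> ('a answer list \<Rightarrow> 'a answer) \<Rightarrow> (nat \<Rightarrow> bool)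
   \<Rightarrow> nat \<Rightarrow> 'a \<Rightarrow> real" where
  "weight V E p Q C W b t = snd (run V E p Q C W b t)"

definition Hb :: "real \<Rightarrow> real" where
  "Hb p = - p * log 2 p - (1 - p) * log 2 (1 - p)"

end

theory Submission
  imports Defs
begin

lemma weight_lower:
  assumes "\<And>h. correct_answer E vstar (Q h) (C h)"
    and "0 < p" and "p < 1/2"
  shows "weight V E p Q C W b t vstar \<ge>
           (1 / real (card V)) * (\<Prod>i<t. if b i then p else 1 - p)"
proof (induction t)
  case 0
  then show ?case by (simp add: weight_def)
next
  case (Suc t)
  obtain h w where hw: "run V E p Q C W b t = (h, w)" by (cases "run V E p Q C W b t")
  have wt: "weight V E p Q C W b t = w" using hw by (simp add: weight_def)
  let ?a = "if b t then W h else C h"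
  have ws: "weight V E p Q C W b (Suc t) = update V E p w (Q h) ?a"
    using hw by (simp add: weight_def Let_def)
  have L0: "0 \<le> (1 / real (card V)) * (\<Prod>i<t. if b i then p else 1 - p)"
    using assms by (intro mult_nonneg_nonneg prod_nonneg) auto
  have w0: "0 \<le> w vstar" using Suc.IH L0 wt by simp
  have comp: "compatible V E w (Q h) (C h) vstar"
    using assms(1)[of h] by (auto simp: correct_answer_def compatible_def split: if_splits)
  have step: "update V E p w (Q h) ?a vstar \<ge> (if b t then p else 1 - p) * w vstar"
  proof (cases "b t")
    case True
    then show ?thesis using w0 assms by (auto simp: update_def intro: mult_right_mono)
  next
    case False
    then show ?thesis using comp by (simp add: update_def)
  qed
  have "(1 / real (card V)) * (\<Prod>i<Suc t. if b i then p else 1 - p)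
        = (if b t then p else 1 - p) * ((1 / real (card V)) * (\<Prod>i<t. if b i then p else 1 - p))"
    by (simp add: lessThan_Suc ac_simps)
  also have "\<dots> \<le> (if b t then p else 1 - p) * w vstar"
    using Suc wt assms by (intro mult_left_mono) auto
  also have "\<dots> \<le> weight V E p Q C W b (Suc t) vstar" using step ws by simp
  finally show ?case .
qed

lemma prod_count:
  fixes p :: real
  shows "(\<Prod>i<t. if b i then p else 1 - p) = p ^ card {i\<in>{..<t}. b i} * (1 - p) ^ (t - card {i\<in>{..<t}. b i})"
proof -
  have "(\<Prod>i<t. if b i then p else 1 - p) = p ^ card {i\<in>{..<t}. b i} * (1 - p) ^ card {i\<in>{..<t}. \<not> b i}"
    by (simp add: prod.If_cases Int_def)
  moreover have "card {i\<in>{..<t}. \<not> b i} = t - card {i\<in>{..<t}. b i}"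
  proof -
    have "{i\<in>{..<t}. \<not> b i} = {..<t} - {i\<in>{..<t}. b i}" by auto
    then show ?thesis using card_Diff_subset[of "{i\<in>{..<t}. b i}" "{..<t}"] by auto
  qed
  ultimately show ?thesis by simp
qed

lemma H_eq:
  fixes p :: real and n :: nat
  assumes "0 < p" "p < 1"
  shows "2 powr (- Hb p * real n) = (1 - p) powr real n * ((1 - p) / p) powr (- (p * real n))"
proof -
  have p1: "0 < 1 - p" using assms by simp
  have "- Hb p * real n = log 2 p * (p * n) + log 2 (1 - p) * ((1 - p) * n)"
    by (simp add: Hb_def algebra_simps)
  then have "2 powr (- Hb p * real n) = 2 powr (log 2 p * (p * n)) * 2 powr (log 2 (1 - p) * ((1 - p) * n))"
    by (simp add: powr_add)
  also have "\<dots> = p powr (p * n) * (1 - p) powr ((1 - p) * n)"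
    using assms p1 by (simp add: powr_powr [symmetric])
  also have "(1 - p) powr ((1 - p) * n) = (1 - p) powr n / (1 - p) powr (p * n)"
    by (simp add: powr_diff [symmetric] algebra_simps)
  also have "((1 - p) / p) powr (- (p * real n)) = p powr (p * n) / (1 - p) powr (p * n)"
    using assms p1 by (simp add: powr_minus_divide powr_divide)
  ultimately show ?thesis by simp
qed

lemma P_eq:
  fixes p :: real and n k :: nat
  assumes "0 < p" "p < 1" "k \<le> n"
  shows "p ^ k * (1 - p) ^ (n - k) = (1 - p) powr real n * ((1 - p) / p) powr (- real k)"
proof -
  have p1: "0 < 1 - p" using assms by simp
  have "p ^ k * (1 - p) ^ (n - k) = p powr real k * (1 - p) powr (real n - real k)"
  proof -
    have "p powr real k = p ^ k" using assms(1) by (rule powr_realpow)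
    moreover have "(1 - p) powr real (n - k) = (1 - p) ^ (n - k)" using p1 by (rule powr_realpow)
    moreover have "real (n - k) = real n - real k" using assms by simp
    ultimately show ?thesis by simp
  qed
  also have "(1 - p) powr (real n - real k) = (1 - p) powr n / (1 - p) powr k"
    by (simp add: powr_diff)
  also have "((1 - p) / p) powr (- real k) = p powr k / (1 - p) powr k"
    using assms p1 by (simp add: powr_minus_divide powr_divide)
  ultimately show ?thesis by simp
qed
theorem lemma6:
  fixes V :: "'a set" and E :: "'a \<Rightarrow> 'a \<Rightarrow> bool" and p \<delta> :: real and \<tau> :: nat
    and vstar :: 'a and Q :: "'a answer list \<Rightarrow> 'a"
    and C W :: "'a answer list \<Rightarrow> 'a answer"
  assumes "connected_graph V E"
    and "vstar \<in> V"
    and "0 < p" and "p < 1/2"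
    and "\<And>h. Q h \<in> V"
    and "\<And>h. correct_answer E vstar (Q h) (C h)"
    and "\<And>h. valid_answer E (Q h) (W h) \<and> W h \<noteq> C h"
    and "\<tau> \<ge> 1"
    and "0 < \<delta>" and "\<delta> < 1/2"
  shows "measure_pmf.prob (Pi_pmf {..<\<tau>} False (\<lambda>_. bernoulli_pmf p))
           {b. weight V E p Q C W b \<tau> vstar \<ge>
               (1 / real (card V)) * ((1 - p) / p) powr (- sqrt (real \<tau> / 2 * ln (1 / \<delta>)))
                 * 2 powr (- Hb p * real \<tau>)}
         \<ge> 1 - \<delta>"
proof -
  define s where "s = sqrt (real \<tau> / 2 * ln (1 / \<delta>))"
  define M where "M = Pi_pmf {..<\<tau>} False (\<lambda>_. bernoulli_pmf p)"
  define K where "K = (\<lambda>b::nat\<Rightarrow>bool. card {i\<in>{..<\<tau>}. b i})"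
  define G where "G = (1 - p) / p"
  have p1: "0 < 1 - p" using assms by simp
  have G1: "G > 1" using assms by (simp add: G_def field_simps)
  have lnpos: "ln (1 / \<delta>) > 0" using assms by simp
  have s0: "s \<ge> 0" using lnpos by (simp add: s_def)
  have s2: "s\<^sup>2 = real \<tau> / 2 * ln (1 / \<delta>)" using lnpos by (simp add: s_def)
  define B where "B = {b. real \<tau> * p + s \<le> real (K b)}"
  have binom: "binomial_pmf \<tau> p = map_pmf K M"
    unfolding M_def K_def by (rule binomial_pmf_altdef') (use assms in auto)
  have "measure_pmf.prob M B = measure_pmf.prob (binomial_pmf \<tau> p) {x. real \<tau> * p + s \<le> real x}"
    by (simp add: binom B_def)
  also have "\<dots> \<le> exp (- 2 * s\<^sup>2 / real \<tau>)"
    by (rule binomial_distribution.prob_ge) (use assms s0 in \<open>auto simp: binomial_distribution_def\<close>)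
  also have "\<dots> = \<delta>"
  proof -
    have "2 * s\<^sup>2 / real \<tau> = ln (1 / \<delta>)" using assms s2 by (simp add: field_simps)
    then have "- 2 * s\<^sup>2 / real \<tau> = - ln (1 / \<delta>)" by simp
    then show ?thesis using assms by (simp add: ln_div)
  qed
  finally have PB: "measure_pmf.prob M B \<le> \<delta>" .
  have sub: "UNIV - B \<subseteq> {b. weight V E p Q C W b \<tau> vstar \<ge>
               (1 / real (card V)) * G powr (- s) * 2 powr (- Hb p * real \<tau>)}"
  proof
    fix b assume "b \<in> UNIV - B"
    then have Kb: "real (K b) < real \<tau> * p + s" by (auto simp: B_def)
    have Kt: "K b \<le> \<tau>" unfolding K_def using card_mono[of "{..<\<tau>}" "{i\<in>{..<\<tau>}. b i}"] by auto
    have H: "2 powr (- Hb p * real \<tau>) = (1 - p) powr real \<tau> * G powr (- (p * real \<tau>))"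
      unfolding G_def using H_eq[of p \<tau>] assms by simp
    have P: "(\<Prod>i<\<tau>. if b i then p else 1 - p) = (1 - p) powr real \<tau> * G powr (- real (K b))"
    proof -
      have "(\<Prod>i<\<tau>. if b i then p else 1 - p) = p ^ K b * (1 - p) ^ (\<tau> - K b)"
        by (simp add: prod_count K_def)
      also have "\<dots> = (1 - p) powr real \<tau> * G powr (- real (K b))"
        unfolding G_def using P_eq[of p "K b" \<tau>] assms Kt by simp
      finally show ?thesis .
    qed
    have Gs: "G powr (- (s + p * real \<tau>)) = G powr (- s) * G powr (- (p * real \<tau>))"
      using powr_add[of G "- s" "- (p * real \<tau>)"] by simp
    have "(1 / real (card V)) * G powr (- s) * 2 powr (- Hb p * real \<tau>)
        = (1 / real (card V)) * ((1 - p) powr real \<tau> * G powr (- (s + p * real \<tau>)))"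
      unfolding H Gs by (simp only: mult_ac)
    also have "\<dots> \<le> (1 / real (card V)) * ((1 - p) powr real \<tau> * G powr (- real (K b)))"
    proof -
      have "G powr (- (s + p * real \<tau>)) \<le> G powr (- real (K b))"
        using G1 Kb by (intro powr_mono) (auto simp: algebra_simps)
      then show ?thesis by (intro mult_left_mono) auto
    qed
    also have "\<dots> \<le> weight V E p Q C W b \<tau> vstar"
      using weight_lower[where b=b and t=\<tau> and V=V and W=W, OF assms(6,3,4)] P by simp
    finally show "b \<in> {b. weight V E p Q C W b \<tau> vstar \<ge>
               (1 / real (card V)) * G powr (- s) * 2 powr (- Hb p * real \<tau>)}" by simp
  qed
  have "1 - \<delta> \<le> 1 - measure_pmf.prob M B" using PB by simp
  also have "\<dots> = measure_pmf.prob M (UNIV - B)"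
    using measure_pmf.prob_compl[of B M] by simp
  also have "\<dots> \<le> measure_pmf.prob M {b. weight V E p Q C W b \<tau> vstar \<ge>
               (1 / real (card V)) * G powr (- s) * 2 powr (- Hb p * real \<tau>)}"
    by (rule measure_pmf.finite_measure_mono[OF sub]) simp
  finally show ?thesis unfolding M_def G_def s_def .
qed

end
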